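(* Let $(A,\circ,[\cdot,\cdot],\mathcal{B})$ be a finite-dimensional quadratic dual pre-Poisson algebra and let $\phi:A\to A^*$ be the linear isomorphism $\langle\phi(x),y\rangle=\mathcal{B}(x,y)$. Let $r\in A\otimes A$ be symmetric. Then $r$ is a solution of the permutative-Leibniz Yang–Baxter equation if and only if $P_r:=\tilde r\circ\phi:A\to A$ is a Rota–Baxter operator on $(A,\circ,[\cdot,\cdot])$.
   Context: Field $\mathbb{F}$ of characteristic $0$. Dual pre-Poisson algebra: $x\circ(y\circ z)=(x\circ y)\circ z=(y\circ x)\circ z$; $[x,[y,z]]=[[x,y],z]+[y,[x,z]]$; $[x,y\circ z]=[x,y]\circ z+y\circ[x,z]$; $[x\circ y,z]=x\circ[y,z]+y\circ[x,z]$; $[x,y]\circ z=-[y,x]\circ z$. Quadratic: $\mathcal{B}$ is a nondegenerate skew-symmetric bilinear form with $\mathcal{B}(x\circ y,z)=\mathcal{B}(x,y\circ z-z\circ y)$ and $\mathcal{B}([x,y],z)=\mathcal{B}(x,[y,z]+[z,y])$. $\tilde r:A^*\to A$ is $\langle\tilde r(u^* ),v^*\rangle=\langle r,u^*\otimes v^*\rangle$. A Rota–Baxter operator is a linear $P:A\to A$ with $P(x)\circ P(y)=P(P(x)\circ y+x\circ P(y))$ and $[P(x),P(y)]=P([P(x),y]+[x,P(y)])$. PLYBE: with $x\blacksquare y=x\circ y-y\circ x$, $x\square y=[x,y]+[y,x]$, for $r=\sum_i a_i\otimes b_i$, $\mathbf{P}(r)=\sum_{i,j}\big(a_i\otimes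 a_j\otimes b_i\circ b_j-a_i\otimes b_i\circ a_j\otimes b_j+a_i\blacksquare a_j\otimes b_j\otimes b_i\big)$, $\mathbf{L}(r)=\sum_{i,j}\big(a_i\otimes a_j\otimes[b_i,b_j]+a_i\otimes[b_i,a_j]\otimes b_j-a_i\square a_j\otimes b_i\otimes b_j\big)$; $r$ is a solution if $\mathbf{P}(r)=\mathbf{L}(r)=0$; symmetric means flip-invariant. *)

theory Defs
  imports "HOL-Library.Function_Algebras"
begin

text \<open>A finite-dimensional vector space over a field 'k is modelled in coordinates as
  'n \<Rightarrow> 'k for a finite index type 'n (a chosen basis). Tensors in A\<otimes>A and A\<otimes>A\<otimes>A
  are coefficient arrays w.r.t. the product basis; the dual A* is identified with
  'n \<Rightarrow> 'k via the pairing below.\<close>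

type_synonym ('n, 'k) vec = "'n \<Rightarrow> 'k"

definition smul :: "'k::field \<Rightarrow> ('n, 'k) vec \<Rightarrow> ('n, 'k) vec" where
  "smul c x = (\<lambda>i. c * x i)"

definition basis_vec :: "'n \<Rightarrow> ('n, 'k::field) vec" where
  "basis_vec p = (\<lambda>i. if i = p then 1 else 0)"

definition bilinear_map :: "(('n, 'k::field) vec \<Rightarrow> ('n, 'k) vec \<Rightarrow> ('n, 'k) vec) \<Rightarrow> bool" where
  "bilinear_map m \<longleftrightarrow>
     (\<forall>x y z. m (x + y) z = m x z + m y z) \<and>
     (\<forall>x y z. m x (y + z) = m x y + m x z) \<and>
     (\<forall>c x y. m (smul c x) y = smul c (m x y)) \<and>
     (\<forall>c x y. m x (smul c y) = smul c (m x y))"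

definition bilinear_form :: "(('n, 'k::field) vec \<Rightarrow> ('n, 'k) vec \<Rightarrow> 'k) \<Rightarrow> bool" where
  "bilinear_form B \<longleftrightarrow>
     (\<forall>x y z. B (x + y) z = B x z + B y z) \<and>
     (\<forall>x y z. B x (y + z) = B x y + B x z) \<and>
     (\<forall>c x y. B (smul c x) y = c * B x y) \<and>
     (\<forall>c x y. B x (smul c y) = c * B x y)"

definition dual_pre_Poisson ::
  "(('n, 'k::field) vec \<Rightarrow> ('n, 'k) vec \<Rightarrow> ('n, 'k) vec) \<Rightarrow>
   (('n, 'k) vec \<Rightarrow> ('n, 'k) vec \<Rightarrow> ('n, 'k) vec) \<Rightarrow> bool" where
  "dual_pre_Poisson circ br \<longleftrightarrow>
     bilinear_map circ \<and> bilinear_map br \<and>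
     (\<forall>x y z. circ x (circ y z) = circ (circ x y) z) \<and>
     (\<forall>x y z. circ (circ x y) z = circ (circ y x) z) \<and>
     (\<forall>x y z. br x (br y z) = br (br x y) z + br y (br x z)) \<and>
     (\<forall>x y z. br x (circ y z) = circ (br x y) z + circ y (br x z)) \<and>
     (\<forall>x y z. br (circ x y) z = circ x (br y z) + circ y (br x z)) \<and>
     (\<forall>x y z. circ (br x y) z = - circ (br y x) z)"

definition quadratic_form ::
  "(('n, 'k::field) vec \<Rightarrow> ('n, 'k) vec \<Rightarrow> ('n, 'k) vec) \<Rightarrow>
   (('n, 'k) vec \<Rightarrow> ('n, 'k) vec \<Rightarrow> ('n, 'k) vec) \<Rightarrow>
   (('n, 'k) vec \<Rightarrow> ('n, 'k) vec \<Rightarrow> 'k) \<Rightarrow> bool" where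
  "quadratic_form circ br B \<longleftrightarrow>
     bilinear_form B \<and>
     (\<forall>x y. B x y = - B y x) \<and>
     (\<forall>x. (\<forall>y. B x y = 0) \<longrightarrow> x = 0) \<and>
     (\<forall>x y z. B (circ x y) z = B x (circ y z - circ z y)) \<and>
     (\<forall>x y z. B (br x y) z = B x (br y z + br z y))"

definition tensor3 :: "('n, 'k::field) vec \<Rightarrow> ('n, 'k) vec \<Rightarrow> ('n, 'k) vec \<Rightarrow> 'n \<Rightarrow> 'n \<Rightarrow> 'n \<Rightarrow> 'k" where
  "tensor3 x y z = (\<lambda>i j k. x i * y j * z k)"

text \<open>r = \<Sum>_{p,q} r p q e_p \<otimes> e_q, i.e. the decomposition a_(p,q) = r p q e_p, b_(p,q) = e_q.\<close>
definition PLYBE_P ::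
  "(('n::finite, 'k::field) vec \<Rightarrow> ('n, 'k) vec \<Rightarrow> ('n, 'k) vec) \<Rightarrow> ('n \<Rightarrow> 'n \<Rightarrow> 'k) \<Rightarrow> 'n \<Rightarrow> 'n \<Rightarrow> 'n \<Rightarrow> 'k" where
  "PLYBE_P circ r = (\<lambda>i j k. \<Sum>p\<in>UNIV. \<Sum>q\<in>UNIV. \<Sum>p'\<in>UNIV. \<Sum>q'\<in>UNIV.
      let a = smul (r p q) (basis_vec p); b = basis_vec q;
          a' = smul (r p' q') (basis_vec p'); b' = basis_vec q' in
      tensor3 a a' (circ b b') i j k
      - tensor3 a (circ b a') b' i j k
      + tensor3 (circ a a' - circ a' a) b' b i j k)"

definition PLYBE_L ::
  "(('n::finite, 'k::field) vec \<Rightarrow> ('n, 'k) vec \<Rightarrow> ('n, 'k) vec) \<Rightarrow> ('n \<Rightarrow> 'n \<Rightarrow> 'k) \<Rightarrow> 'n \<Rightarrow> 'n \<Rightarrow> 'n \<Rightarrow> 'k" where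
  "PLYBE_L br r = (\<lambda>i j k. \<Sum>p\<in>UNIV. \<Sum>q\<in>UNIV. \<Sum>p'\<in>UNIV. \<Sum>q'\<in>UNIV.
      let a = smul (r p q) (basis_vec p); b = basis_vec q;
          a' = smul (r p' q') (basis_vec p'); b' = basis_vec q' in
      tensor3 a a' (br b b') i j k
      + tensor3 a (br b a') b' i j k
      - tensor3 (br a a' + br a' a) b b' i j k)"

definition PLYBE_solution ::
  "(('n::finite, 'k::field) vec \<Rightarrow> ('n, 'k) vec \<Rightarrow> ('n, 'k) vec) \<Rightarrow>
   (('n, 'k) vec \<Rightarrow> ('n, 'k) vec \<Rightarrow> ('n, 'k) vec) \<Rightarrow> ('n \<Rightarrow> 'n \<Rightarrow> 'k) \<Rightarrow> bool" where
  "PLYBE_solution circ br r \<longleftrightarrow> PLYBE_P circ r = 0 \<and> PLYBE_L br r = 0"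

definition symmetric_tensor :: "('n \<Rightarrow> 'n \<Rightarrow> 'k) \<Rightarrow> bool" where
  "symmetric_tensor r \<longleftrightarrow> (\<forall>p q. r p q = r q p)"

definition pairing :: "('n::finite, 'k::field) vec \<Rightarrow> ('n, 'k) vec \<Rightarrow> 'k" where
  "pairing u x = (\<Sum>i\<in>UNIV. u i * x i)"

definition phi_map :: "(('n::finite, 'k::field) vec \<Rightarrow> ('n, 'k) vec \<Rightarrow> 'k) \<Rightarrow> ('n, 'k) vec \<Rightarrow> ('n, 'k) vec" where
  "phi_map B x = (\<lambda>j. B x (basis_vec j))"

text \<open>r-tilde: <r~(u), v> = <r, u \<otimes> v> = \<Sum>_{p,q} r p q u_p v_q.\<close>
definition r_tilde :: "('n::finite \<Rightarrow> 'n \<Rightarrow> 'k::field) \<Rightarrow> ('n, 'k) vec \<Rightarrow> ('n, 'k) vec" where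
  "r_tilde r u = (\<lambda>q. \<Sum>p\<in>UNIV. r p q * u p)"

definition rota_baxter ::
  "(('n, 'k::field) vec \<Rightarrow> ('n, 'k) vec \<Rightarrow> ('n, 'k) vec) \<Rightarrow>
   (('n, 'k) vec \<Rightarrow> ('n, 'k) vec \<Rightarrow> ('n, 'k) vec) \<Rightarrow> (('n, 'k) vec \<Rightarrow> ('n, 'k) vec) \<Rightarrow> bool" where
  "rota_baxter circ br P \<longleftrightarrow>
     (\<forall>x y. P (x + y) = P x + P y) \<and> (\<forall>c x. P (smul c x) = smul c (P x)) \<and>
     (\<forall>x y. circ (P x) (P y) = P (circ (P x) y + circ x (P y))) \<and>
     (\<forall>x y. br (P x) (P y) = P (br (P x) y + br x (P y)))"

end

theory Submission
  imports Defs "HOL.Vector_Spaces"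
begin

lemma sum_fun_apply: "(sum f S) i = (\<Sum>x\<in>S. f x i)"
  by (induction S rule: infinite_finite_induct) auto

interpretation fv: vector_space "smul :: 'k::field \<Rightarrow> ('n \<Rightarrow> 'k) \<Rightarrow> _"
  by unfold_locales (auto simp: smul_def algebra_simps)

lemma sum_delta_mult1: "(\<Sum>j\<in>(UNIV::'n::finite set). (f j::'k::field) * (if i = j then 1 else 0)) = f i"
proof -
  have "(\<lambda>j. f j * (if i = j then 1 else 0)) = (\<lambda>j. if j = i then f i else 0)" by auto
  then show ?thesis by (simp only:) simp
qed

lemma sum_delta_mult2: "(\<Sum>j\<in>(UNIV::'n::finite set). (f j::'k::field) * (if j = i then 1 else 0)) = f i"
proof -
  have "(\<lambda>j. f j * (if j = i then 1 else 0)) = (\<lambda>j. if j = i then f i else 0)" by auto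
  then show ?thesis by (simp only:) simp
qed

lemma vec_expand: "(x::('n::finite,'k::field) vec) = (\<Sum>q\<in>UNIV. smul (x q) (basis_vec q))"
  by (rule ext) (simp add: sum_fun_apply smul_def basis_vec_def sum_delta_mult1)

lemma basis_vec_inj: "inj (basis_vec :: 'n \<Rightarrow> ('n,'k::field) vec)"
  by (rule injI) (metis basis_vec_def one_neq_zero)

interpretation fdv: finite_dimensional_vector_space "smul :: 'k::field \<Rightarrow> ('n::finite \<Rightarrow> 'k) \<Rightarrow> _" "range basis_vec"
proof unfold_locales
  show "finite (range (basis_vec :: 'n \<Rightarrow> ('n,'k) vec))" by simp
  show "fv.independent (range (basis_vec :: 'n \<Rightarrow> ('n,'k) vec))"
  proof -
    have "\<not> fv.dependent (range (basis_vec :: 'n \<Rightarrow> ('n,'k) vec))"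
    proof
      assume "fv.dependent (range (basis_vec :: 'n \<Rightarrow> ('n,'k) vec))"
      then obtain u v where v: "v \<in> range (basis_vec :: 'n \<Rightarrow> ('n,'k) vec)" "u v \<noteq> 0"
        and s: "(\<Sum>w\<in>range basis_vec. smul (u w) w) = (0 :: ('n,'k) vec)"
        by (auto simp: fv.dependent_finite)
      obtain i where i: "v = basis_vec i" using v by auto
      have "0 = (\<Sum>w\<in>range basis_vec. smul (u w) w) i" using s by simp
      also have "\<dots> = (\<Sum>j\<in>UNIV. smul (u (basis_vec j)) (basis_vec j) i)"
        by (simp add: sum_fun_apply sum.reindex basis_vec_inj)
      also have "\<dots> = u v" by (simp add: smul_def basis_vec_def i sum_delta_mult1 sum_delta_mult2)
      finally show False using v by simp
    qed
    then show ?thesis by simp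
  qed
  show "fv.span (range (basis_vec :: 'n \<Rightarrow> ('n,'k) vec)) = UNIV"
  proof -
    have "x \<in> fv.span (range basis_vec)" for x :: "('n,'k) vec"
      by (subst vec_expand) (intro fv.span_sum fv.span_scale fv.span_base, simp)
    then show ?thesis by auto
  qed
qed

lemma swap4: "(\<Sum>p\<in>A. \<Sum>q\<in>B. \<Sum>p'\<in>C. \<Sum>q'\<in>D. F p q p' q') =
   (\<Sum>q\<in>B. \<Sum>q'\<in>D. \<Sum>p\<in>A. \<Sum>p'\<in>C. F p q p' q')"
proof -
  have "(\<Sum>p\<in>A. \<Sum>q\<in>B. \<Sum>p'\<in>C. \<Sum>q'\<in>D. F p q p' q') =
        (\<Sum>q\<in>B. \<Sum>p\<in>A. \<Sum>p'\<in>C. \<Sum>q'\<in>D. F p q p' q')" by (rule sum.swap)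
  also have "\<dots> = (\<Sum>q\<in>B. \<Sum>p\<in>A. \<Sum>q'\<in>D. \<Sum>p'\<in>C. F p q p' q')"
    by (rule sum.cong[OF refl], rule sum.cong[OF refl], rule sum.swap)
  also have "\<dots> = (\<Sum>q\<in>B. \<Sum>q'\<in>D. \<Sum>p\<in>A. \<Sum>p'\<in>C. F p q p' q')"
    by (rule sum.cong[OF refl], rule sum.swap)
  finally show ?thesis .
qed

lemma core4: "(\<Sum>p\<in>A. \<Sum>q\<in>B. \<Sum>p'\<in>C. \<Sum>q'\<in>D. ((r p q::'k::field) * X p) * (r p' q' * Y p') * K q q') =
   (\<Sum>q\<in>B. \<Sum>q'\<in>D. (\<Sum>p\<in>A. r p q * X p) * (\<Sum>p'\<in>C. r p' q' * Y p') * K q q')"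
  apply (subst swap4)
  apply (simp add: sum_distrib_left sum_distrib_right mult_ac)
  apply (rule sum.cong[OF refl], rule sum.cong[OF refl])
  apply (subst sum.swap)
  apply (simp add: mult_ac)
  done

definition lin :: "(('n,'k::field) vec \<Rightarrow> 'k) \<Rightarrow> bool" where
  "lin L \<longleftrightarrow> (\<forall>x y. L (x+y) = L x + L y) \<and> (\<forall>c x. L (smul c x) = c * L x)"

lemma lin_zero: "lin L \<Longrightarrow> L 0 = 0"
  unfolding lin_def by (metis add_cancel_right_right)

lemma lin_sum: "lin L \<Longrightarrow> L (sum f S) = (\<Sum>x\<in>S. L (f x))"
  by (induction S rule: infinite_finite_induct) (auto simp: lin_zero lin_def)

lemma lin_expand: "lin L \<Longrightarrow> L (x::('n::finite,'k::field) vec) = (\<Sum>q\<in>UNIV. x q * L (basis_vec q))"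
  by (subst vec_expand) (simp add: lin_sum lin_def)

lemma bilin_expand:
  fixes F :: "('n::finite,'k::field) vec \<Rightarrow> ('n,'k) vec \<Rightarrow> 'k"
  assumes "\<And>b. lin (\<lambda>a. F a b)" "\<And>a. lin (F a)"
  shows "F (x::('n::finite,'k::field) vec) y = (\<Sum>q\<in>UNIV. \<Sum>q'\<in>UNIV. x q * y q' * F (basis_vec q) (basis_vec q'))"
proof -
  have "F x y = (\<Sum>q\<in>UNIV. x q * F (basis_vec q) y)"
    using lin_expand[of "\<lambda>a. F a y" x] assms(1) by simp
  also have "\<dots> = (\<Sum>q\<in>UNIV. x q * (\<Sum>q'\<in>UNIV. y q' * F (basis_vec q) (basis_vec q')))"
    using lin_expand[of "F _" y] assms(2) by simp
  finally show ?thesis by (simp add: sum_distrib_left mult_ac)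
qed

definition pair3 :: "('n::finite \<Rightarrow> 'n \<Rightarrow> 'n \<Rightarrow> 'k::field) \<Rightarrow> ('n,'k) vec \<Rightarrow> ('n,'k) vec \<Rightarrow> ('n,'k) vec \<Rightarrow> 'k" where
  "pair3 T u v w = (\<Sum>i\<in>UNIV. \<Sum>j\<in>UNIV. \<Sum>k\<in>UNIV. T i j k * u i * v j * w k)"

lemma pair3_add: "pair3 (\<lambda>i j k. X i j k + Y i j k) u v w = pair3 X u v w + pair3 Y u v w"
  by (simp add: pair3_def algebra_simps sum.distrib)

lemma pair3_zero: "pair3 (\<lambda>i j k. 0) u v w = 0"
  by (simp add: pair3_def)

lemma pair3_sum: "pair3 (\<lambda>i j k. \<Sum>p\<in>S. F p i j k) u v w = (\<Sum>p\<in>S. pair3 (F p) u v w)"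
  by (induction S rule: infinite_finite_induct) (simp_all add: pair3_zero pair3_add)

lemma pair3_lin3: "pair3 (\<lambda>i j k. X i j k - Y i j k + Z i j k) u v w = pair3 X u v w - pair3 Y u v w + pair3 Z u v w"
  by (simp add: pair3_def algebra_simps sum.distrib sum_subtractf)

lemma pair3_lin3': "pair3 (\<lambda>i j k. X i j k + Y i j k - Z i j k) u v w = pair3 X u v w + pair3 Y u v w - pair3 Z u v w"
  by (simp add: pair3_def algebra_simps sum.distrib sum_subtractf)

lemma mult_if10: "(a::'a::semiring_1) * (if c then 1 else 0) = (if c then a else 0)"
  "(if c then 1 else 0) * (a::'a::semiring_1) = (if c then a else 0)"
  "(if c then b else 0) * (a::'a::semiring_1) = (if c then b * a else 0)" by auto

lemma pair3_basis: "pair3 T (basis_vec i) (basis_vec j) (basis_vec k) = T i j k"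
  by (simp add: pair3_def basis_vec_def mult_if10)

lemma core4b: "(\<Sum>p\<in>A. \<Sum>q\<in>B. \<Sum>p'\<in>C. \<Sum>q'\<in>D. ((r p q::'k::field) * X p) * (r p' q' * Y q') * K q p') =
   (\<Sum>q\<in>B. \<Sum>p'\<in>C. (\<Sum>p\<in>A. r p q * X p) * (\<Sum>q'\<in>D. r p' q' * Y q') * K q p')"
proof -
  have "(\<Sum>p\<in>A. \<Sum>q\<in>B. \<Sum>p'\<in>C. \<Sum>q'\<in>D. ((r p q::'k::field) * X p) * (r p' q' * Y q') * K q p') =
    (\<Sum>q\<in>B. \<Sum>p\<in>A. \<Sum>p'\<in>C. \<Sum>q'\<in>D. ((r p q::'k::field) * X p) * (r p' q' * Y q') * K q p')"
    by (rule sum.swap)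
  also have "\<dots> = (\<Sum>q\<in>B. \<Sum>p'\<in>C. \<Sum>p\<in>A. \<Sum>q'\<in>D. ((r p q::'k::field) * X p) * (r p' q' * Y q') * K q p')"
    by (rule sum.cong[OF refl], rule sum.swap)
  also have "\<dots> = (\<Sum>q\<in>B. \<Sum>p'\<in>C. (\<Sum>p\<in>A. r p q * X p) * (\<Sum>q'\<in>D. r p' q' * Y q') * K q p')"
    apply (simp add: sum_distrib_left sum_distrib_right mult_ac)
    apply (rule sum.cong[OF refl], rule sum.cong[OF refl])
    apply (subst sum.swap)
    apply (simp add: mult_ac)
    done
  finally show ?thesis .
qed

lemma core4c: "(\<Sum>p\<in>A. \<Sum>q\<in>B. \<Sum>p'\<in>C. \<Sum>q'\<in>D. ((r p q::'k::field) * X q) * (r p' q' * Y q') * K p p') =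
   (\<Sum>p\<in>A. \<Sum>p'\<in>C. (\<Sum>q\<in>B. r p q * X q) * (\<Sum>q'\<in>D. r p' q' * Y q') * K p p')"
proof -
  have "(\<Sum>p\<in>A. \<Sum>q\<in>B. \<Sum>p'\<in>C. \<Sum>q'\<in>D. ((r p q::'k::field) * X q) * (r p' q' * Y q') * K p p') =
    (\<Sum>p\<in>A. \<Sum>p'\<in>C. \<Sum>q\<in>B. \<Sum>q'\<in>D. ((r p q::'k::field) * X q) * (r p' q' * Y q') * K p p')"
    by (rule sum.cong[OF refl], rule sum.swap)
  also have "\<dots> = (\<Sum>p\<in>A. \<Sum>p'\<in>C. (\<Sum>q\<in>B. r p q * X q) * (\<Sum>q'\<in>D. r p' q' * Y q') * K p p')"
    apply (simp add: sum_distrib_left sum_distrib_right mult_ac)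
    apply (rule sum.cong[OF refl], rule sum.cong[OF refl])
    apply (subst sum.swap)
    apply (simp add: mult_ac)
    done
  finally show ?thesis .
qed

lemma lin6: assumes "a + b = a'" "b + c = b'" "b' + a' = b" shows "b' = - (a::'a::ab_group_add)"
proof -
  have "(b + c) + (a + b) = b" using assms by simp
  then have "b + c = - a" by (simp add: algebra_simps eq_neg_iff_add_eq_0)
  then show ?thesis using assms by simp
qed

lemma smul_apply: "smul c v i = c * v i" by (simp add: smul_def)

lemma lin_diff: "lin L \<Longrightarrow> L (a - b) = L a - L b"
  unfolding lin_def by (metis add_diff_cancel diff_add_cancel eq_diff_eq)

lemma lin_diffI: "lin L1 \<Longrightarrow> lin L2 \<Longrightarrow> lin (\<lambda>a. L1 a - L2 a)"
  unfolding lin_def by (simp add: algebra_simps)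

lemma lin_compI: "lin L \<Longrightarrow> (\<And>a b. f (a+b) = f a + f b) \<Longrightarrow> (\<And>c a. f (smul c a) = smul c (f a)) \<Longrightarrow> lin (\<lambda>a. L (f a))"
  unfolding lin_def by simp

context
  fixes circ br :: "('n::finite \<Rightarrow> 'k::field_char_0) \<Rightarrow> ('n \<Rightarrow> 'k) \<Rightarrow> ('n \<Rightarrow> 'k)"
    and B :: "('n \<Rightarrow> 'k) \<Rightarrow> ('n \<Rightarrow> 'k) \<Rightarrow> 'k"
    and r :: "'n \<Rightarrow> 'n \<Rightarrow> 'k"
  assumes dpp: "dual_pre_Poisson circ br"
    and qf: "quadratic_form circ br B"
    and sym: "symmetric_tensor r"
begin

lemma bilB: "bilinear_form B" using qf unfolding quadratic_form_def by blast
lemma bilC: "bilinear_map circ" using dpp by (simp add: dual_pre_Poisson_def)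
lemma bilL: "bilinear_map br" using dpp by (simp add: dual_pre_Poisson_def)

lemma linB1: "lin (\<lambda>a. B a b)" using bilB by (simp add: bilinear_form_def lin_def)
lemma linB2: "lin (B a)" using bilB by (simp add: bilinear_form_def lin_def)

lemma B_simps: "B (smul c a) b = c * B a b" "B a (smul c b) = c * B a b"
  "B (a - a') b = B a b - B a' b" "B a (b - b') = B a b - B a b'"
  "B (a + a') b = B a b + B a' b" "B a (b + b') = B a b + B a b'"
  using bilB linB1 linB2 lin_diff[OF linB1] lin_diff[OF linB2] by (auto simp: bilinear_form_def)

lemma C_simps: "circ (smul c a) b = smul c (circ a b)" "circ a (smul c b) = smul c (circ a b)"
  "circ (a + a') b = circ a b + circ a' b" "circ a (b + b') = circ a b + circ a b'"
  using bilC by (auto simp: bilinear_map_def)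

lemma L_simps: "br (smul c a) b = smul c (br a b)" "br a (smul c b) = smul c (br a b)"
  "br (a + a') b = br a b + br a' b" "br a (b + b') = br a b + br a b'"
  using bilL by (auto simp: bilinear_map_def)

lemma linBC1: "lin (\<lambda>a. B z (circ a b))"
  by (rule lin_compI[OF linB2]) (simp_all add: C_simps)
lemma linBC2: "lin (\<lambda>b. B z (circ a b))"
  by (rule lin_compI[OF linB2]) (simp_all add: C_simps)
lemma linBL1: "lin (\<lambda>a. B z (br a b))"
  by (rule lin_compI[OF linB2]) (simp_all add: L_simps)
lemma linBL2: "lin (\<lambda>b. B z (br a b))"
  by (rule lin_compI[OF linB2]) (simp_all add: L_simps)

lemma pair_lin: "(\<Sum>i\<in>UNIV. a i * B x (basis_vec i)) = B x a"
  using lin_expand[OF linB2, of x a] by simp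

lemma pair_phi: "pair3 (tensor3 a b c) (phi_map B x) (phi_map B y) (phi_map B z) = B x a * B y b * B z c"
proof -
  have "B x a * B y b * B z c = (\<Sum>i\<in>UNIV. a i * B x (basis_vec i)) * (\<Sum>j\<in>UNIV. b j * B y (basis_vec j)) * (\<Sum>k\<in>UNIV. c k * B z (basis_vec k))"
    by (simp add: pair_lin)
  also have "\<dots> = (\<Sum>j\<in>UNIV. \<Sum>i\<in>UNIV. \<Sum>k\<in>UNIV. a i * B x (basis_vec i) * (b j * B y (basis_vec j)) * (c k * B z (basis_vec k)))"
    by (simp add: sum_distrib_left sum_distrib_right mult_ac)
  also have "\<dots> = (\<Sum>i\<in>UNIV. \<Sum>j\<in>UNIV. \<Sum>k\<in>UNIV. a i * B x (basis_vec i) * (b j * B y (basis_vec j)) * (c k * B z (basis_vec k)))"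
    by (rule sum.swap)
  also have "\<dots> = pair3 (tensor3 a b c) (phi_map B x) (phi_map B y) (phi_map B z)"
    by (simp add: pair3_def tensor3_def phi_map_def mult_ac)
  finally show ?thesis by simp
qed

definition "PP = r_tilde r \<circ> phi_map B"

lemma PP_apply: "PP x q = (\<Sum>p\<in>UNIV. r p q * B x (basis_vec p))"
  by (simp add: PP_def r_tilde_def phi_map_def)

lemma PP_sym: "PP x p = (\<Sum>q\<in>UNIV. r p q * B x (basis_vec q))"
  using sym by (simp add: PP_apply symmetric_tensor_def)

lemma T1: "(\<Sum>p\<in>UNIV. \<Sum>q\<in>UNIV. \<Sum>p'\<in>UNIV. \<Sum>q'\<in>UNIV.
      B x (smul (r p q) (basis_vec p)) * B y (smul (r p' q') (basis_vec p')) * B z (circ (basis_vec q) (basis_vec q')))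
   = B z (circ (PP x) (PP y))"
proof -
  let ?e = "basis_vec :: 'n \<Rightarrow> ('n,'k) vec"
  have "(\<Sum>p\<in>UNIV. \<Sum>q\<in>UNIV. \<Sum>p'\<in>UNIV. \<Sum>q'\<in>UNIV.
      B x (smul (r p q) (?e p)) * B y (smul (r p' q') (?e p')) * B z (circ (?e q) (?e q')))
    = (\<Sum>p\<in>UNIV. \<Sum>q\<in>UNIV. \<Sum>p'\<in>UNIV. \<Sum>q'\<in>UNIV.
      (r p q * B x (?e p)) * (r p' q' * B y (?e p')) * B z (circ (?e q) (?e q')))"
    by (simp add: B_simps mult_ac)
  also have "\<dots> = (\<Sum>q\<in>UNIV. \<Sum>q'\<in>UNIV. (\<Sum>p\<in>UNIV. r p q * B x (?e p)) * (\<Sum>p'\<in>UNIV. r p' q' * B y (?e p')) * B z (circ (?e q) (?e q')))"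
    by (rule core4)
  also have "\<dots> = (\<Sum>q\<in>UNIV. \<Sum>q'\<in>UNIV. PP x q * PP y q' * B z (circ (?e q) (?e q')))"
    by (simp add: PP_apply)
  also have "\<dots> = B z (circ (PP x) (PP y))"
    using bilin_expand[of "\<lambda>a b. B z (circ a b)" "PP x" "PP y"] linBC1 linBC2 by simp
  finally show ?thesis .
qed

lemma T2: "(\<Sum>p\<in>UNIV. \<Sum>q\<in>UNIV. \<Sum>p'\<in>UNIV. \<Sum>q'\<in>UNIV.
      B x (smul (r p q) (basis_vec p)) * B y (circ (basis_vec q) (smul (r p' q') (basis_vec p'))) * B z (basis_vec q'))
   = B y (circ (PP x) (PP z))"
proof -
  let ?e = "basis_vec :: 'n \<Rightarrow> ('n,'k) vec"
  have "(\<Sum>p\<in>UNIV. \<Sum>q\<in>UNIV. \<Sum>p'\<in>UNIV. \<Sum>q'\<in>UNIV.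
      B x (smul (r p q) (?e p)) * B y (circ (?e q) (smul (r p' q') (?e p'))) * B z (?e q'))
    = (\<Sum>p\<in>UNIV. \<Sum>q\<in>UNIV. \<Sum>p'\<in>UNIV. \<Sum>q'\<in>UNIV.
      (r p q * B x (?e p)) * (r p' q' * B z (?e q')) * B y (circ (?e q) (?e p')))"
    by (simp add: B_simps C_simps mult_ac)
  also have "\<dots> = (\<Sum>q\<in>UNIV. \<Sum>p'\<in>UNIV. (\<Sum>p\<in>UNIV. r p q * B x (?e p)) * (\<Sum>q'\<in>UNIV. r p' q' * B z (?e q')) * B y (circ (?e q) (?e p')))"
    by (rule core4b)
  also have "\<dots> = (\<Sum>q\<in>UNIV. \<Sum>p'\<in>UNIV. PP x q * PP z p' * B y (circ (?e q) (?e p')))"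
    by (simp only: PP_apply[of x] PP_sym[of z])
  also have "\<dots> = B y (circ (PP x) (PP z))"
    using bilin_expand[of "\<lambda>a b. B y (circ a b)" "PP x" "PP z"] linBC1 linBC2 by simp
  finally show ?thesis .
qed

lemma T3: "(\<Sum>p\<in>UNIV. \<Sum>q\<in>UNIV. \<Sum>p'\<in>UNIV. \<Sum>q'\<in>UNIV.
      B x (circ (smul (r p q) (basis_vec p)) (smul (r p' q') (basis_vec p')) - circ (smul (r p' q') (basis_vec p')) (smul (r p q) (basis_vec p))) * B y (basis_vec q') * B z (basis_vec q))
   = B x (circ (PP z) (PP y) - circ (PP y) (PP z))"
proof -
  let ?e = "basis_vec :: 'n \<Rightarrow> ('n,'k) vec"
  have "(\<Sum>p\<in>UNIV. \<Sum>q\<in>UNIV. \<Sum>p'\<in>UNIV. \<Sum>q'\<in>UNIV.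
      B x (circ (smul (r p q) (?e p)) (smul (r p' q') (?e p')) - circ (smul (r p' q') (?e p')) (smul (r p q) (?e p))) * B y (?e q') * B z (?e q))
    = (\<Sum>p\<in>UNIV. \<Sum>q\<in>UNIV. \<Sum>p'\<in>UNIV. \<Sum>q'\<in>UNIV.
      (r p q * B z (?e q)) * (r p' q' * B y (?e q')) * (B x (circ (?e p) (?e p')) - B x (circ (?e p') (?e p))))"
    by (simp add: B_simps C_simps algebra_simps)
  also have "\<dots> = (\<Sum>p\<in>UNIV. \<Sum>p'\<in>UNIV. (\<Sum>q\<in>UNIV. r p q * B z (?e q)) * (\<Sum>q'\<in>UNIV. r p' q' * B y (?e q')) * (B x (circ (?e p) (?e p')) - B x (circ (?e p') (?e p))))"
    by (rule core4c)
  also have "\<dots> = (\<Sum>p\<in>UNIV. \<Sum>p'\<in>UNIV. PP z p * PP y p' * (B x (circ (?e p) (?e p')) - B x (circ (?e p') (?e p))))"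
    by (simp add: PP_sym)
  also have "\<dots> = B x (circ (PP z) (PP y)) - B x (circ (PP y) (PP z))"
    using bilin_expand[of "\<lambda>a b. B x (circ a b) - B x (circ b a)" "PP z" "PP y"]
      lin_diffI[OF linBC1 linBC2] lin_diffI[OF linBC2 linBC1] by simp
  finally show ?thesis by (simp add: B_simps)
qed

lemma pairP: "pair3 (PLYBE_P circ r) (phi_map B x) (phi_map B y) (phi_map B z) =
   B z (circ (PP x) (PP y)) - B y (circ (PP x) (PP z)) + B x (circ (PP z) (PP y) - circ (PP y) (PP z))"
proof -
  let ?e = "basis_vec :: 'n \<Rightarrow> ('n,'k) vec"
  have "pair3 (PLYBE_P circ r) (phi_map B x) (phi_map B y) (phi_map B z) =
    (\<Sum>p\<in>UNIV. \<Sum>q\<in>UNIV. \<Sum>p'\<in>UNIV. \<Sum>q'\<in>UNIV.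
      B x (smul (r p q) (?e p)) * B y (smul (r p' q') (?e p')) * B z (circ (?e q) (?e q'))
    - B x (smul (r p q) (?e p)) * B y (circ (?e q) (smul (r p' q') (?e p'))) * B z (?e q')
    + B x (circ (smul (r p q) (?e p)) (smul (r p' q') (?e p')) - circ (smul (r p' q') (?e p')) (smul (r p q) (?e p))) * B y (?e q') * B z (?e q))"
    by (simp only: PLYBE_P_def Let_def pair3_sum pair3_lin3 pair_phi)
  also have "\<dots> = (\<Sum>p\<in>UNIV. \<Sum>q\<in>UNIV. \<Sum>p'\<in>UNIV. \<Sum>q'\<in>UNIV.
      B x (smul (r p q) (?e p)) * B y (smul (r p' q') (?e p')) * B z (circ (?e q) (?e q')))
    - (\<Sum>p\<in>UNIV. \<Sum>q\<in>UNIV. \<Sum>p'\<in>UNIV. \<Sum>q'\<in>UNIV. B x (smul (r p q) (?e p)) * B y (circ (?e q) (smul (r p' q') (?e p'))) * B z (?e q'))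
    + (\<Sum>p\<in>UNIV. \<Sum>q\<in>UNIV. \<Sum>p'\<in>UNIV. \<Sum>q'\<in>UNIV. B x (circ (smul (r p q) (?e p)) (smul (r p' q') (?e p')) - circ (smul (r p' q') (?e p')) (smul (r p q) (?e p))) * B y (?e q') * B z (?e q))"
    by (simp only: sum.distrib sum_subtractf)
  finally show ?thesis by (simp only: T1 T2 T3)
qed

lemma lin_addI: "lin L1 \<Longrightarrow> lin L2 \<Longrightarrow> lin (\<lambda>a. L1 a + L2 a)"
  unfolding lin_def by (simp add: algebra_simps)

lemma S1: "(\<Sum>p\<in>UNIV. \<Sum>q\<in>UNIV. \<Sum>p'\<in>UNIV. \<Sum>q'\<in>UNIV.
      B x (smul (r p q) (basis_vec p)) * B y (smul (r p' q') (basis_vec p')) * B z (br (basis_vec q) (basis_vec q')))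
   = B z (br (PP x) (PP y))"
proof -
  let ?e = "basis_vec :: 'n \<Rightarrow> ('n,'k) vec"
  have "(\<Sum>p\<in>UNIV. \<Sum>q\<in>UNIV. \<Sum>p'\<in>UNIV. \<Sum>q'\<in>UNIV.
      B x (smul (r p q) (?e p)) * B y (smul (r p' q') (?e p')) * B z (br (?e q) (?e q')))
    = (\<Sum>p\<in>UNIV. \<Sum>q\<in>UNIV. \<Sum>p'\<in>UNIV. \<Sum>q'\<in>UNIV.
      (r p q * B x (?e p)) * (r p' q' * B y (?e p')) * B z (br (?e q) (?e q')))"
    by (simp add: B_simps mult_ac)
  also have "\<dots> = (\<Sum>q\<in>UNIV. \<Sum>q'\<in>UNIV. (\<Sum>p\<in>UNIV. r p q * B x (?e p)) * (\<Sum>p'\<in>UNIV. r p' q' * B y (?e p')) * B z (br (?e q) (?e q')))"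
    by (rule core4)
  also have "\<dots> = (\<Sum>q\<in>UNIV. \<Sum>q'\<in>UNIV. PP x q * PP y q' * B z (br (?e q) (?e q')))"
    by (simp add: PP_apply)
  also have "\<dots> = B z (br (PP x) (PP y))"
    using bilin_expand[of "\<lambda>a b. B z (br a b)" "PP x" "PP y"] linBL1 linBL2 by simp
  finally show ?thesis .
qed

lemma S2: "(\<Sum>p\<in>UNIV. \<Sum>q\<in>UNIV. \<Sum>p'\<in>UNIV. \<Sum>q'\<in>UNIV.
      B x (smul (r p q) (basis_vec p)) * B y (br (basis_vec q) (smul (r p' q') (basis_vec p'))) * B z (basis_vec q'))
   = B y (br (PP x) (PP z))"
proof -
  let ?e = "basis_vec :: 'n \<Rightarrow> ('n,'k) vec"
  have "(\<Sum>p\<in>UNIV. \<Sum>q\<in>UNIV. \<Sum>p'\<in>UNIV. \<Sum>q'\<in>UNIV.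
      B x (smul (r p q) (?e p)) * B y (br (?e q) (smul (r p' q') (?e p'))) * B z (?e q'))
    = (\<Sum>p\<in>UNIV. \<Sum>q\<in>UNIV. \<Sum>p'\<in>UNIV. \<Sum>q'\<in>UNIV.
      (r p q * B x (?e p)) * (r p' q' * B z (?e q')) * B y (br (?e q) (?e p')))"
    by (simp add: B_simps L_simps mult_ac)
  also have "\<dots> = (\<Sum>q\<in>UNIV. \<Sum>p'\<in>UNIV. (\<Sum>p\<in>UNIV. r p q * B x (?e p)) * (\<Sum>q'\<in>UNIV. r p' q' * B z (?e q')) * B y (br (?e q) (?e p')))"
    by (rule core4b)
  also have "\<dots> = (\<Sum>q\<in>UNIV. \<Sum>p'\<in>UNIV. PP x q * PP z p' * B y (br (?e q) (?e p')))"
    by (simp only: PP_apply[of x] PP_sym[of z])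
  also have "\<dots> = B y (br (PP x) (PP z))"
    using bilin_expand[of "\<lambda>a b. B y (br a b)" "PP x" "PP z"] linBL1 linBL2 by simp
  finally show ?thesis .
qed

lemma S3: "(\<Sum>p\<in>UNIV. \<Sum>q\<in>UNIV. \<Sum>p'\<in>UNIV. \<Sum>q'\<in>UNIV.
      B x (br (smul (r p q) (basis_vec p)) (smul (r p' q') (basis_vec p')) + br (smul (r p' q') (basis_vec p')) (smul (r p q) (basis_vec p))) * B y (basis_vec q) * B z (basis_vec q'))
   = B x (br (PP y) (PP z) + br (PP z) (PP y))"
proof -
  let ?e = "basis_vec :: 'n \<Rightarrow> ('n,'k) vec"
  have "(\<Sum>p\<in>UNIV. \<Sum>q\<in>UNIV. \<Sum>p'\<in>UNIV. \<Sum>q'\<in>UNIV.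
      B x (br (smul (r p q) (?e p)) (smul (r p' q') (?e p')) + br (smul (r p' q') (?e p')) (smul (r p q) (?e p))) * B y (?e q) * B z (?e q'))
    = (\<Sum>p\<in>UNIV. \<Sum>q\<in>UNIV. \<Sum>p'\<in>UNIV. \<Sum>q'\<in>UNIV.
      (r p q * B y (?e q)) * (r p' q' * B z (?e q')) * (B x (br (?e p) (?e p')) + B x (br (?e p') (?e p))))"
    by (simp add: B_simps L_simps algebra_simps)
  also have "\<dots> = (\<Sum>p\<in>UNIV. \<Sum>p'\<in>UNIV. (\<Sum>q\<in>UNIV. r p q * B y (?e q)) * (\<Sum>q'\<in>UNIV. r p' q' * B z (?e q')) * (B x (br (?e p) (?e p')) + B x (br (?e p') (?e p))))"
    by (rule core4c)
  also have "\<dots> = (\<Sum>p\<in>UNIV. \<Sum>p'\<in>UNIV. PP y p * PP z p' * (B x (br (?e p) (?e p')) + B x (br (?e p') (?e p))))"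
    by (simp add: PP_sym)
  also have "\<dots> = B x (br (PP y) (PP z)) + B x (br (PP z) (PP y))"
    using bilin_expand[of "\<lambda>a b. B x (br a b) + B x (br b a)" "PP y" "PP z"]
      lin_addI[OF linBL1 linBL2] lin_addI[OF linBL2 linBL1] by simp
  finally show ?thesis by (simp add: B_simps)
qed

lemma pairL: "pair3 (PLYBE_L br r) (phi_map B x) (phi_map B y) (phi_map B z) =
   B z (br (PP x) (PP y)) + B y (br (PP x) (PP z)) - B x (br (PP y) (PP z) + br (PP z) (PP y))"
proof -
  let ?e = "basis_vec :: 'n \<Rightarrow> ('n,'k) vec"
  have "pair3 (PLYBE_L br r) (phi_map B x) (phi_map B y) (phi_map B z) =
    (\<Sum>p\<in>UNIV. \<Sum>q\<in>UNIV. \<Sum>p'\<in>UNIV. \<Sum>q'\<in>UNIV.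
      B x (smul (r p q) (?e p)) * B y (smul (r p' q') (?e p')) * B z (br (?e q) (?e q'))
    + B x (smul (r p q) (?e p)) * B y (br (?e q) (smul (r p' q') (?e p'))) * B z (?e q')
    - B x (br (smul (r p q) (?e p)) (smul (r p' q') (?e p')) + br (smul (r p' q') (?e p')) (smul (r p q) (?e p))) * B y (?e q) * B z (?e q'))"
    by (simp only: PLYBE_L_def Let_def pair3_sum pair3_lin3' pair_phi)
  also have "\<dots> = (\<Sum>p\<in>UNIV. \<Sum>q\<in>UNIV. \<Sum>p'\<in>UNIV. \<Sum>q'\<in>UNIV.
      B x (smul (r p q) (?e p)) * B y (smul (r p' q') (?e p')) * B z (br (?e q) (?e q')))
    + (\<Sum>p\<in>UNIV. \<Sum>q\<in>UNIV. \<Sum>p'\<in>UNIV. \<Sum>q'\<in>UNIV. B x (smul (r p q) (?e p)) * B y (br (?e q) (smul (r p' q') (?e p'))) * B z (?e q'))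
    - (\<Sum>p\<in>UNIV. \<Sum>q\<in>UNIV. \<Sum>p'\<in>UNIV. \<Sum>q'\<in>UNIV. B x (br (smul (r p q) (?e p)) (smul (r p' q') (?e p')) + br (smul (r p' q') (?e p')) (smul (r p q) (?e p))) * B y (?e q) * B z (?e q'))"
    by (simp only: sum.distrib sum_subtractf)
  finally show ?thesis by (simp only: S1 S2 S3)
qed

lemma skew: "B a b = - B b a" using qf unfolding quadratic_form_def by blast
lemma nondeg: "(\<And>y. B w y = 0) \<Longrightarrow> w = 0" using qf unfolding quadratic_form_def by blast
lemma invC: "B (circ a b) c = B a (circ b c - circ c b)" using qf unfolding quadratic_form_def by blast
lemma invL: "B (br a b) c = B a (br b c + br c b)" using qf unfolding quadratic_form_def by blast

lemma BP_skew: "B (PP a) b = - B a (PP b)"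
proof -
  let ?e = "basis_vec :: 'n \<Rightarrow> ('n,'k) vec"
  have "B (PP a) b = (\<Sum>q\<in>UNIV. PP a q * B (?e q) b)"
    using lin_expand[OF linB1[of b], of "PP a"] by simp
  also have "\<dots> = (\<Sum>q\<in>UNIV. \<Sum>p\<in>UNIV. - (r p q * B a (?e p) * B b (?e q)))"
    by (simp add: PP_apply sum_distrib_right skew[of "?e _" b] sum_negf)
  also have "\<dots> = (\<Sum>p\<in>UNIV. \<Sum>q\<in>UNIV. - (r p q * B a (?e p) * B b (?e q)))"
    by (rule sum.swap)
  also have "\<dots> = - (\<Sum>p\<in>UNIV. PP b p * B a (?e p))"
    by (simp add: PP_sym sum_distrib_right sum_distrib_left sum_negf mult_ac)
  also have "\<dots> = - B a (PP b)"
    using lin_expand[OF linB2[of a], of "PP b"] by simp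
  finally show ?thesis .
qed

lemma fE: "B (circ x y) z + B (circ y z) x = B (circ z y) x"
  using invC[of x y z] skew[of x "circ y z"] skew[of x "circ z y"] by (simp add: B_simps)

lemma circ_id: "B (circ u w) v = - B (circ u v) w"
proof -
  have e1: "B (circ u v) w + B (circ v w) u = B (circ w v) u" by (rule fE)
  have e2: "B (circ v w) u + B (circ w u) v = B (circ u w) v" by (rule fE)
  have e4: "B (circ u w) v + B (circ w v) u = B (circ v w) u" by (rule fE)
  from e1 e2 e4 show ?thesis by (rule lin6)
qed

lemma br_id: "B (br u v) w = B (br u w) v"
  by (simp add: invL add.commute)

lemma PP_add: "PP (a + b) = PP a + PP b"
  by (rule ext) (simp add: PP_apply B_simps algebra_simps sum.distrib)
lemma PP_diff: "PP (a - b) = PP a - PP b"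
  by (rule ext) (simp add: PP_apply B_simps algebra_simps sum_subtractf)
lemma PP_smul: "PP (smul c a) = smul c (PP a)"
  by (rule ext) (simp add: PP_apply B_simps smul_apply sum_distrib_left mult_ac)

lemma pairP_final: "pair3 (PLYBE_P circ r) (phi_map B x) (phi_map B y) (phi_map B z) =
   B (circ (PP x) (PP z) - PP (circ (PP x) z) - PP (circ x (PP z))) y"
proof -
  have a: "B z (circ (PP x) (PP y)) = - B (PP (circ (PP x) z)) y"
    by (simp only: skew[of z "circ (PP x) (PP y)"] circ_id[of "PP x" z "PP y"] BP_skew[of "circ (PP x) z" y] minus_minus)
  have b: "B y (circ (PP x) (PP z)) = - B (circ (PP x) (PP z)) y" by (rule skew)
  have c: "B x (circ (PP z) (PP y) - circ (PP y) (PP z)) = - B (PP (circ x (PP z))) y"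
    by (simp only: invC[of x "PP z" "PP y", symmetric] BP_skew[of "circ x (PP z)" y] minus_minus)
  show ?thesis unfolding pairP a b c by (simp add: B_simps PP_diff)
qed

lemma pairL_final: "pair3 (PLYBE_L br r) (phi_map B x) (phi_map B y) (phi_map B z) =
   - B (br (PP x) (PP y) - PP (br (PP x) y) - PP (br x (PP y))) z"
proof -
  have a: "B z (br (PP x) (PP y)) = - B (br (PP x) (PP y)) z" by (rule skew)
  have b: "B y (br (PP x) (PP z)) = B (PP (br (PP x) y)) z"
    by (simp only: skew[of y "br (PP x) (PP z)"] br_id[of "PP x" "PP z" y] BP_skew[of "br (PP x) y" z])
  have c: "B x (br (PP y) (PP z) + br (PP z) (PP y)) = - B (PP (br x (PP y))) z"
    by (simp only: invL[of x "PP y" "PP z", symmetric] BP_skew[of "br x (PP y)" z] minus_minus)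
  show ?thesis unfolding pairL a b c by (simp add: B_simps PP_diff)
qed

lemma phi_linear: "Vector_Spaces.linear smul smul (phi_map B)"
  by unfold_locales (auto simp: phi_map_def B_simps smul_apply fun_eq_iff algebra_simps)

lemma phi_inj: "inj (phi_map B)"
proof (rule injI)
  fix a b assume h: "phi_map B a = phi_map B b"
  have "B (a - b) w = 0" for w
  proof -
    have "B (a - b) w = (\<Sum>q\<in>UNIV. w q * B (a - b) (basis_vec q))"
      using lin_expand[OF linB2[of "a - b"], of w] by simp
    also have "\<dots> = 0"
      using h by (simp add: B_simps phi_map_def fun_eq_iff)
    finally show ?thesis .
  qed
  then have "a - b = 0" by (rule nondeg)
  then show "a = b" by simp
qed

lemma phi_surj: "surj (phi_map B)"
  by (rule fdv.linear_inj_imp_surj[OF phi_linear phi_inj])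

lemma tensor_zero: "T = 0 \<longleftrightarrow> (\<forall>x y z. pair3 T (phi_map B x) (phi_map B y) (phi_map B z) = 0)"
proof
  assume "T = 0" then show "\<forall>x y z. pair3 T (phi_map B x) (phi_map B y) (phi_map B z) = 0"
    by (simp add: pair3_def)
next
  assume h: "\<forall>x y z. pair3 T (phi_map B x) (phi_map B y) (phi_map B z) = 0"
  show "T = 0"
  proof (intro ext)
    fix i j k
    obtain x where x: "phi_map B x = basis_vec i" using phi_surj by (metis surjD)
    obtain y where y: "phi_map B y = basis_vec j" using phi_surj by (metis surjD)
    obtain z where z: "phi_map B z = basis_vec k" using phi_surj by (metis surjD)
    have "T i j k = pair3 T (phi_map B x) (phi_map B y) (phi_map B z)"
      by (simp add: x y z pair3_basis)
    then show "T i j k = 0 i j k" using h by simp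
  qed
qed

lemma B_zero1: "B 0 y = 0" using lin_zero[OF linB1] by simp

lemma nd_iff: "(\<forall>a b y. B (D a b) y = 0) \<longleftrightarrow> (\<forall>a b. D a b = 0)"
proof
  assume h: "\<forall>a b y. B (D a b) y = 0"
  show "\<forall>a b. D a b = 0"
  proof (intro allI)
    fix a b show "D a b = 0" by (rule nondeg) (use h in blast)
  qed
next
  assume "\<forall>a b. D a b = 0" then show "\<forall>a b y. B (D a b) y = 0" by (simp add: B_zero1)
qed

lemma RB_P: "PLYBE_P circ r = 0 \<longleftrightarrow> (\<forall>x y. circ (PP x) (PP y) = PP (circ (PP x) y + circ x (PP y)))"
proof -
  have "PLYBE_P circ r = 0 \<longleftrightarrow> (\<forall>x z y. B (circ (PP x) (PP z) - PP (circ (PP x) z) - PP (circ x (PP z))) y = 0)"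
    by (subst tensor_zero) (auto simp: pairP_final)
  also have "\<dots> \<longleftrightarrow> (\<forall>x z. circ (PP x) (PP z) - PP (circ (PP x) z) - PP (circ x (PP z)) = 0)"
    by (rule nd_iff)
  also have "\<dots> \<longleftrightarrow> (\<forall>x y. circ (PP x) (PP y) = PP (circ (PP x) y + circ x (PP y)))"
    by (simp add: PP_add algebra_simps)
  finally show ?thesis .
qed


lemma RB_L: "PLYBE_L br r = 0 \<longleftrightarrow> (\<forall>x y. br (PP x) (PP y) = PP (br (PP x) y + br x (PP y)))"
proof -
  have "PLYBE_L br r = 0 \<longleftrightarrow> (\<forall>x y z. B (br (PP x) (PP y) - PP (br (PP x) y) - PP (br x (PP y))) z = 0)"
    by (subst tensor_zero) (auto simp: pairL_final)
  also have "\<dots> \<longleftrightarrow> (\<forall>x y. br (PP x) (PP y) - PP (br (PP x) y) - PP (br x (PP y)) = 0)"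
    by (rule nd_iff)
  also have "\<dots> \<longleftrightarrow> (\<forall>x y. br (PP x) (PP y) = PP (br (PP x) y + br x (PP y)))"
    by (simp add: PP_add algebra_simps)
  finally show ?thesis .
qed

lemma main: "PLYBE_solution circ br r \<longleftrightarrow> rota_baxter circ br (r_tilde r \<circ> phi_map B)"
  unfolding PLYBE_solution_def rota_baxter_def PP_def[symmetric] RB_P RB_L
  by (simp add: PP_add PP_smul)

end

theorem proposition3p24:
  fixes circ br :: "('n::finite \<Rightarrow> 'k::field_char_0) \<Rightarrow> ('n \<Rightarrow> 'k) \<Rightarrow> ('n \<Rightarrow> 'k)"
    and B :: "('n \<Rightarrow> 'k) \<Rightarrow> ('n \<Rightarrow> 'k) \<Rightarrow> 'k"
    and r :: "'n \<Rightarrow> 'n \<Rightarrow> 'k"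
  assumes "dual_pre_Poisson circ br"
    and "quadratic_form circ br B"
    and "symmetric_tensor r"
  shows "PLYBE_solution circ br r \<longleftrightarrow> rota_baxter circ br (r_tilde r \<circ> phi_map B)"
  by (rule main[OF assms])

end
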